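(* Let $\{\mu_n\}$ and $\mu$ be Borel probability measures on $\mathbb R^s$ with compact supports, and suppose $\mu_n\to\mu$ weakly. If $\mathcal Z(\mu)=\emptyset$, then $\{\mu_n\}$ has a subsequence $\{\mu_{n_k}\}$ that is an equi-positive family, i.e., there is $\epsilon_0>0$ such that for every $x\in[0,1)^s$ and every $k$ there exists $m\in\mathbb Z^s$ with $|\widehat{\mu_{n_k}}(x+m)|>\epsilon_0$.
   Context: $\widehat\mu(\xi)=\int e^{2\pi i\langle x,\xi\rangle}d\mu(x)$, and $\mathcal Z(\mu)=\{\xi\in[0,1)^s:\widehat\mu(\xi+k)=0\text{ for all }k\in\mathbb Z^s\}$. Weak convergence means $\int f\,d\mu_n\to\int f\,d\mu$ for all continuous compactly supported $f$. *)

theory Defs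
  imports "HOL-Probability.Probability"
begin

definition fourier_meas :: "(real^'n) measure \<Rightarrow> real^'n \<Rightarrow> complex" where
  "fourier_meas M \<xi> = integral\<^sup>L M (\<lambda>x. cis (2 * pi * (x \<bullet> \<xi>)))"

definition int_lattice :: "(real^'n) set" where
  "int_lattice = {m. \<forall>i. m $ i \<in> \<int>}"

definition unit_cube :: "(real^'n) set" where
  "unit_cube = {x. \<forall>i. 0 \<le> x $ i \<and> x $ i < 1}"

definition zero_set :: "(real^'n) measure \<Rightarrow> (real^'n) set" where
  "zero_set M = {\<xi> \<in> unit_cube. \<forall>k \<in> int_lattice. fourier_meas M (\<xi> + k) = 0}"

definition borel_prob_cs :: "(real^'n) measure \<Rightarrow> bool" where
  "borel_prob_cs M \<longleftrightarrow> prob_space M \<and> sets M = sets borel \<and>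
     (\<exists>K. compact K \<and> emeasure M (space M - K) = 0)"

definition weak_conv :: "(nat \<Rightarrow> (real^'n) measure) \<Rightarrow> (real^'n) measure \<Rightarrow> bool" where
  "weak_conv Ms M \<longleftrightarrow> (\<forall>f :: real^'n \<Rightarrow> real.
      continuous_on UNIV f \<and> compact (closure {x. f x \<noteq> 0}) \<longrightarrow>
      (\<lambda>n. integral\<^sup>L (Ms n) f) \<longlonglongrightarrow> integral\<^sup>L M f)"

end

theory Submission
  imports Defs
begin

lemma cis_diff_le: "norm (cis a - cis b) \<le> \<bar>a - b\<bar>"
proof -
  have "cis b * cis (a - b) = cis a" by (simp add: cis_mult)
  hence "cis a - cis b = cis b * (cis (a - b) - 1)"
    by (simp add: algebra_simps)
  hence "norm (cis a - cis b) = norm (cis (a - b) - 1)" by (simp add: norm_mult)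
  also have "\<dots> \<le> \<bar>a - b\<bar>"
    using iexp_approx1[of "a - b" 0] by (simp add: cis_conv_exp)
  finally show ?thesis .
qed

lemma bnd_int:
  fixes h :: "real^'n \<Rightarrow> 'b::{banach,second_countable_topology}"
  assumes "prob_space Mx" "sets Mx = sets borel" "continuous_on UNIV h" "\<And>x. norm (h x) \<le> B"
  shows "integrable Mx h"
proof -
  interpret prob_space Mx by fact
  have e: "measurable Mx borel = measurable borel borel" by (rule measurable_cong_sets[OF assms(2) refl])
  have "h \<in> borel_measurable Mx"
    by (subst e) (rule borel_measurable_continuous_onI[OF assms(3)])
  thus ?thesis by (intro integrable_const_bound[where B=B]) (auto simp: assms(4))
qed

lemma prob_int_const: "prob_space Mx \<Longrightarrow> integral\<^sup>L Mx (\<lambda>x. c) = (c::'b::{banach,second_countable_topology})"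
  by (simp add: prob_space.prob_space)

lemma wc_apply:
  fixes Ms :: "nat \<Rightarrow> (real^'n) measure" and g :: "real^'n \<Rightarrow> real"
  assumes "weak_conv Ms M" "continuous_on UNIV g" "compact (closure {x. g x \<noteq> 0})"
  shows "(\<lambda>n. integral\<^sup>L (Ms n) g) \<longlonglongrightarrow> integral\<^sup>L M g"
  using assms unfolding weak_conv_def by blast

lemma lattice_shift:
  fixes M :: "(real^'n) measure" and \<xi> :: "real^'n"
  assumes "zero_set M = {}"
  shows "\<exists>m\<in>int_lattice. fourier_meas M (\<xi> + m) \<noteq> 0"
proof -
  define y :: "real^'n" where "y = (\<chi> i. frac (\<xi>$i))"
  define k :: "real^'n" where "k = (\<chi> i. of_int \<lfloor>\<xi>$i\<rfloor>)"
  have y: "y \<in> unit_cube" unfolding unit_cube_def y_def by (simp add: frac_lt_1)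
  then obtain m' where m': "m' \<in> int_lattice" "fourier_meas M (y + m') \<noteq> 0"
    using assms unfolding zero_set_def by blast
  have "\<xi> + (m' - k) = y + m'"
    by (simp add: vec_eq_iff y_def k_def frac_def)
  moreover have "m' - k \<in> int_lattice" using m'(1) unfolding int_lattice_def k_def by auto
  ultimately show ?thesis using m'(2) by metis
qed

lemma local_claim:
  fixes Ms :: "nat \<Rightarrow> (real^'n) measure" and M :: "(real^'n) measure" and \<zeta> :: "real^'n"
  assumes pMs: "\<And>n. prob_space (Ms n)" and sMs: "\<And>n. sets (Ms n) = sets borel"
    and pM: "prob_space M" and sM: "sets M = sets borel"
    and wc: "weak_conv Ms M"
    and R: "R > 0" and supp: "AE x in M. norm x \<le> R"
    and nz: "fourier_meas M \<zeta> \<noteq> 0"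
  shows "\<exists>\<rho>>0. \<exists>\<delta>>0. \<exists>N. \<forall>n\<ge>N. \<forall>\<eta>. dist \<eta> \<zeta> < \<rho> \<longrightarrow> \<delta> < norm (fourier_meas (Ms n) \<eta>)"
proof -
  define f :: "real^'n \<Rightarrow> real" where "f x = max 0 (min 1 (R + 1 - norm x))" for x
  have fc: "continuous_on UNIV f" unfolding f_def by (intro continuous_intros)
  have f0: "0 \<le> f x" and f1: "f x \<le> 1" for x unfolding f_def by auto
  have fs: "f x \<noteq> 0 \<Longrightarrow> norm x < R + 1" for x unfolding f_def by auto
  have fR: "norm x \<le> R \<Longrightarrow> f x = 1" for x unfolding f_def by auto
  have cpt: "compact (closure {x. g x \<noteq> 0})" if "\<And>x. g x \<noteq> 0 \<Longrightarrow> f x \<noteq> 0" for g :: "real^'n \<Rightarrow> real"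
  proof -
    have "{x. g x \<noteq> 0} \<subseteq> ball 0 (R+1)" using that fs by auto
    hence "bounded {x. g x \<noteq> 0}" using bounded_ball bounded_subset by blast
    thus ?thesis by simp
  qed
  define E :: "real^'n \<Rightarrow> real^'n \<Rightarrow> complex" where "E \<eta> x = cis (2*pi*(x \<bullet> \<eta>))" for \<eta> x
  define h where "h \<eta> x = complex_of_real (f x) * E \<eta> x" for \<eta> x
  have Ec: "continuous_on UNIV (E \<eta>)" for \<eta> unfolding E_def by (intro continuous_intros)
  have hc: "continuous_on UNIV (h \<eta>)" for \<eta> unfolding h_def using Ec fc by (intro continuous_intros)
  have Eb: "norm (E \<eta> x) = 1" for \<eta> x unfolding E_def by simp
  have hb: "norm (h \<eta> x) \<le> 1" for \<eta> x unfolding h_def using Eb f0 f1 by (simp add: norm_mult)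
  have intg: "integrable Mx (h \<eta>) \<and> integrable Mx (E \<eta>) \<and> integrable Mx f"
    if "prob_space Mx" "sets Mx = sets borel" for Mx \<eta>
    using bnd_int[OF that hc[of \<eta>] hb[of \<eta>]] bnd_int[OF that Ec[of \<eta>], where B=1] bnd_int[OF that fc, where B=1] Eb f0 f1 by auto
  define T where "T Mx \<eta> = integral\<^sup>L Mx (h \<eta>)" for Mx \<eta>
  have aeM: "AE x in M. f x = 1" using supp by eventually_elim (simp add: fR)
  have TM: "T M \<zeta> = fourier_meas M \<zeta>"
    unfolding T_def fourier_meas_def
  proof (rule integral_cong_AE)
    show "h \<zeta> \<in> borel_measurable M" "(\<lambda>x. cis (2 * pi * (x \<bullet> \<zeta>))) \<in> borel_measurable M"
      using intg[OF pM sM, of \<zeta>] by (auto simp: E_def[abs_def])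
    show "AE x in M. h \<zeta> x = cis (2 * pi * (x \<bullet> \<zeta>))"
      using aeM by eventually_elim (simp add: h_def E_def)
  qed
  have fM: "integral\<^sup>L M f = 1"
  proof -
    have "integral\<^sup>L M f = integral\<^sup>L M (\<lambda>x. 1::real)"
      by (rule integral_cong_AE) (use intg[OF pM sM] aeM in auto)
    thus ?thesis using prob_space.prob_space[OF pM] by simp
  qed
  have ReT: "Re (T Mx \<eta>) = integral\<^sup>L Mx (\<lambda>x. f x * cos (2*pi*(x \<bullet> \<eta>)))"
    and ImT: "Im (T Mx \<eta>) = integral\<^sup>L Mx (\<lambda>x. f x * sin (2*pi*(x \<bullet> \<eta>)))"
    if "prob_space Mx" "sets Mx = sets borel" for Mx \<eta>
  proof -
    have "Re (T Mx \<eta>) = integral\<^sup>L Mx (\<lambda>x. Re (h \<eta> x))"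
      unfolding T_def by (rule integral_bounded_linear[OF bounded_linear_Re, symmetric]) (use intg[OF that] in auto)
    thus "Re (T Mx \<eta>) = integral\<^sup>L Mx (\<lambda>x. f x * cos (2*pi*(x \<bullet> \<eta>)))"
      by (simp add: h_def E_def)
    have "Im (T Mx \<eta>) = integral\<^sup>L Mx (\<lambda>x. Im (h \<eta> x))"
      unfolding T_def by (rule integral_bounded_linear[OF bounded_linear_Im, symmetric]) (use intg[OF that] in auto)
    thus "Im (T Mx \<eta>) = integral\<^sup>L Mx (\<lambda>x. f x * sin (2*pi*(x \<bullet> \<eta>)))"
      by (simp add: h_def E_def)
  qed
  have Tconv: "(\<lambda>n. T (Ms n) \<zeta>) \<longlonglongrightarrow> T M \<zeta>"
  proof (subst tendsto_complex_iff, intro conjI)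
    show "(\<lambda>n. Re (T (Ms n) \<zeta>)) \<longlonglongrightarrow> Re (T M \<zeta>)"
      unfolding ReT[OF pMs sMs] ReT[OF pM sM]
      by (rule wc_apply[OF wc _ cpt]) (use fc in \<open>auto intro!: continuous_intros\<close>)
    show "(\<lambda>n. Im (T (Ms n) \<zeta>)) \<longlonglongrightarrow> Im (T M \<zeta>)"
      unfolding ImT[OF pMs sMs] ImT[OF pM sM]
      by (rule wc_apply[OF wc _ cpt]) (use fc in \<open>auto intro!: continuous_intros\<close>)
  qed
  have fconv: "(\<lambda>n. integral\<^sup>L (Ms n) f) \<longlonglongrightarrow> 1"
    using wc_apply[OF wc fc cpt] fM by simp
  have dbound: "norm (fourier_meas (Ms n) \<eta> - T (Ms n) \<eta>) \<le> 1 - integral\<^sup>L (Ms n) f" for n \<eta>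
  proof -
    note I = intg[OF pMs sMs, of n \<eta>]
    have "fourier_meas (Ms n) \<eta> - T (Ms n) \<eta> = integral\<^sup>L (Ms n) (\<lambda>x. E \<eta> x - h \<eta> x)"
      unfolding fourier_meas_def T_def E_def[symmetric] using I by (simp add: integral_diff)
    also have "norm \<dots> \<le> integral\<^sup>L (Ms n) (\<lambda>x. 1 - f x)"
    proof (rule Bochner_Integration.integral_norm_bound_integral)
      show "integrable (Ms n) (\<lambda>x. E \<eta> x - h \<eta> x)" using I by auto
      show "integrable (Ms n) (\<lambda>x. 1 - f x)"
        using I prob_space.finite_measure[OF pMs[of n]] by (auto intro!: Bochner_Integration.integrable_diff finite_measure.integrable_const)
      show "norm (E \<eta> x - h \<eta> x) \<le> 1 - f x" for x
      proof -
        have "E \<eta> x - h \<eta> x = complex_of_real (1 - f x) * E \<eta> x" by (simp add: h_def algebra_simps)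
        hence "norm (E \<eta> x - h \<eta> x) = norm (complex_of_real (1 - f x)) * norm (E \<eta> x)"
          by (simp only: norm_mult)
        also have "\<dots> = 1 - f x" using Eb f1 by (simp only: norm_of_real) simp
        finally show ?thesis by simp
      qed
    qed
    also have "\<dots> = 1 - integral\<^sup>L (Ms n) f"
      using I prob_space.finite_measure[OF pMs[of n]] prob_space.prob_space[OF pMs[of n]]
      by (subst Bochner_Integration.integral_diff) (auto intro!: finite_measure.integrable_const)
    finally show ?thesis .
  qed
  define L where "L = 2*pi*(R+1)"
  have L: "L > 0" unfolding L_def using R by simp
  have hlip: "norm (h \<eta> x - h \<zeta> x) \<le> L * dist \<eta> \<zeta>" for \<eta> x
  proof (cases "f x = 0")
    case True thus ?thesis using L by (simp add: h_def)
  next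
    case False
    hence nx: "norm x < R + 1" by (rule fs)
    have "norm (h \<eta> x - h \<zeta> x) = \<bar>f x\<bar> * norm (E \<eta> x - E \<zeta> x)"
      by (simp add: h_def right_diff_distrib[symmetric] norm_mult)
    also have "\<dots> \<le> 1 * \<bar>2*pi*(x \<bullet> \<eta>) - 2*pi*(x \<bullet> \<zeta>)\<bar>"
      unfolding E_def by (rule mult_mono) (use f0 f1 cis_diff_le in auto)
    also have "\<dots> = 2*pi*\<bar>x \<bullet> (\<eta> - \<zeta>)\<bar>"
    proof -
      have "2*pi*(x \<bullet> \<eta>) - 2*pi*(x \<bullet> \<zeta>) = 2*pi*(x \<bullet> (\<eta> - \<zeta>))"
        by (simp only: inner_diff_right right_diff_distrib)
      thus ?thesis by (simp add: abs_mult)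
    qed
    also have "\<dots> \<le> 2*pi*(norm x * norm (\<eta> - \<zeta>))"
      by (intro mult_left_mono Cauchy_Schwarz_ineq2) auto
    also have "\<dots> \<le> L * dist \<eta> \<zeta>"
      unfolding L_def dist_norm mult.assoc using nx by (intro mult_left_mono mult_right_mono) auto
    finally show ?thesis .
  qed
  have Tlip: "norm (T (Ms n) \<eta> - T (Ms n) \<zeta>) \<le> L * dist \<eta> \<zeta>" for n \<eta>
  proof -
    note I1 = intg[OF pMs sMs, of n \<eta>] and I2 = intg[OF pMs sMs, of n \<zeta>]
    have "T (Ms n) \<eta> - T (Ms n) \<zeta> = integral\<^sup>L (Ms n) (\<lambda>x. h \<eta> x - h \<zeta> x)"
      unfolding T_def using I1 I2 by (simp add: integral_diff)
    also have "norm \<dots> \<le> integral\<^sup>L (Ms n) (\<lambda>x. L * dist \<eta> \<zeta>)"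
      by (rule Bochner_Integration.integral_norm_bound_integral)
        (use I1 I2 prob_space.finite_measure[OF pMs[of n]] hlip in \<open>auto intro!: finite_measure.integrable_const\<close>)
    also have "\<dots> = L * dist \<eta> \<zeta>" using prob_space.prob_space[OF pMs[of n]] by simp
    finally show ?thesis .
  qed
  define a where "a = norm (fourier_meas M \<zeta>)"
  have a: "a > 0" unfolding a_def using nz by simp
  have "(\<lambda>n. norm (T (Ms n) \<zeta>)) \<longlonglongrightarrow> a" unfolding a_def TM[symmetric] by (intro tendsto_norm Tconv)
  hence ev1: "eventually (\<lambda>n. a/2 < norm (T (Ms n) \<zeta>)) sequentially"
    by (rule order_tendstoD(1)) (use a in simp)
  have ev2: "eventually (\<lambda>n. 1 - a/8 < integral\<^sup>L (Ms n) f) sequentially"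
    by (rule order_tendstoD(1)[OF fconv]) (use a in simp)
  obtain N where N: "\<And>n. n \<ge> N \<Longrightarrow> a/2 < norm (T (Ms n) \<zeta>) \<and> 1 - a/8 < integral\<^sup>L (Ms n) f"
    using eventually_conj[OF ev1 ev2] unfolding eventually_sequentially by blast
  have pos: "a/(8*L) > 0" "a/4 > 0" using a L by auto
  have main: "\<forall>n\<ge>N. \<forall>\<eta>. dist \<eta> \<zeta> < a/(8*L) \<longrightarrow> a/4 < norm (fourier_meas (Ms n) \<eta>)"
  proof (intro allI impI)
    fix n \<eta> assume n: "n \<ge> N" and d: "dist \<eta> \<zeta> < a/(8*L)"
    have "L * dist \<eta> \<zeta> < L * (a/(8*L))" using d L by (intro mult_strict_left_mono) auto
    also have "\<dots> = a/8" using L by simp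
    finally have Ld: "L * dist \<eta> \<zeta> < a/8" .
    have t1: "norm (T (Ms n) \<zeta>) - norm (T (Ms n) \<eta>) \<le> norm (T (Ms n) \<eta> - T (Ms n) \<zeta>)"
      using norm_triangle_ineq2[of "T (Ms n) \<zeta>" "T (Ms n) \<eta>"] by (simp add: norm_minus_commute)
    have t2: "norm (T (Ms n) \<eta>) - norm (fourier_meas (Ms n) \<eta>) \<le> norm (fourier_meas (Ms n) \<eta> - T (Ms n) \<eta>)"
      using norm_triangle_ineq2[of "T (Ms n) \<eta>" "fourier_meas (Ms n) \<eta>"] by (simp add: norm_minus_commute)
    show "a/4 < norm (fourier_meas (Ms n) \<eta>)"
      using t1 t2 Ld N[OF n] dbound[of n \<eta>] Tlip[of n \<eta>] by linarith
  qed
  show ?thesis using main pos by blast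
qed

theorem lemma3p7:
  fixes Ms :: "nat \<Rightarrow> (real^'n) measure" and M :: "(real^'n) measure"
  assumes "\<And>n. borel_prob_cs (Ms n)"
    and "borel_prob_cs M"
    and "weak_conv Ms M"
    and "zero_set M = {}"
  shows "\<exists>r :: nat \<Rightarrow> nat. strict_mono r \<and> (\<exists>\<epsilon>0>0. \<forall>x \<in> unit_cube. \<forall>k.
           \<exists>m \<in> int_lattice. norm (fourier_meas (Ms (r k)) (x + m)) > \<epsilon>0)"
proof -
  have pMs: "\<And>n. prob_space (Ms n)" and sMs: "\<And>n. sets (Ms n) = sets borel"
    using assms(1) unfolding borel_prob_cs_def by auto
  obtain K where pM: "prob_space M" and sM: "sets M = sets borel" and K: "compact K"
    and K0: "emeasure M (space M - K) = 0"
    using assms(2) unfolding borel_prob_cs_def by auto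
  obtain R where R: "R > 0" and KR: "\<And>x. x \<in> K \<Longrightarrow> norm x \<le> R"
    using compact_imp_bounded[OF K] unfolding bounded_pos by auto
  have supp: "AE x in M. norm x \<le> R"
  proof (rule AE_I[of _ _ "space M - K"])
    show "{x \<in> space M. \<not> norm x \<le> R} \<subseteq> space M - K" using KR by auto
    show "emeasure M (space M - K) = 0" by (rule K0)
    have "K \<in> sets M" unfolding sM using K by (simp add: borel_closed compact_imp_closed)
    thus "space M - K \<in> sets M" by auto
  qed
  define G where "G S \<longleftrightarrow> (\<exists>\<delta>>0. \<exists>N. \<forall>n\<ge>N. \<forall>\<eta>\<in>S. \<exists>m\<in>int_lattice. \<delta> < norm (fourier_meas (Ms n) (\<eta> + m)))"
    for S :: "(real^'n) set"
  have loc: "\<exists>U. open U \<and> \<xi> \<in> U \<and> G U" for \<xi>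
  proof -
    obtain m where m: "m \<in> int_lattice" "fourier_meas M (\<xi> + m) \<noteq> 0"
      using lattice_shift[OF assms(4)] by blast
    obtain \<rho> \<delta> N where rd: "\<rho> > 0" "\<delta> > 0"
      and H: "\<And>n \<eta>. n \<ge> N \<Longrightarrow> dist \<eta> (\<xi> + m) < \<rho> \<Longrightarrow> \<delta> < norm (fourier_meas (Ms n) \<eta>)"
      using local_claim[OF pMs sMs pM sM assms(3) R supp m(2)] by blast
    have "G (ball \<xi> \<rho>)" unfolding G_def
    proof (intro exI[of _ \<delta>] conjI exI[of _ N] allI impI ballI bexI[of _ m])
      fix n \<eta> assume "n \<ge> N" "\<eta> \<in> ball \<xi> \<rho>"
      thus "\<delta> < norm (fourier_meas (Ms n) (\<eta> + m))"
        by (intro H) (auto simp: dist_norm norm_minus_commute)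
    qed (use rd m in auto)
    thus ?thesis using rd by (intro exI[of _ "ball \<xi> \<rho>"]) auto
  qed
  have Gun: "G (\<Union>T)" if "finite T" "\<forall>U\<in>T. G U" for T
    using that
  proof (induction T rule: finite_induct)
    case empty thus ?case unfolding G_def by (intro exI[of _ 1]) auto
  next
    case (insert U T)
    then obtain \<delta>1 N1 where a: "\<delta>1 > 0" "\<forall>n\<ge>N1. \<forall>\<eta>\<in>U. \<exists>m\<in>int_lattice. \<delta>1 < norm (fourier_meas (Ms n) (\<eta> + m))"
      unfolding G_def by auto
    from insert obtain \<delta>2 N2 where b: "\<delta>2 > 0" "\<forall>n\<ge>N2. \<forall>\<eta>\<in>\<Union>T. \<exists>m\<in>int_lattice. \<delta>2 < norm (fourier_meas (Ms n) (\<eta> + m))"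
      unfolding G_def by auto
    show ?case unfolding G_def
    proof (intro exI[of _ "min \<delta>1 \<delta>2"] conjI exI[of _ "max N1 N2"] allI impI ballI)
      show "min \<delta>1 \<delta>2 > 0" using a b by auto
      fix n \<eta> assume n: "max N1 N2 \<le> n" and e: "\<eta> \<in> \<Union>(insert U T)"
      show "\<exists>m\<in>int_lattice. min \<delta>1 \<delta>2 < norm (fourier_meas (Ms n) (\<eta> + m))"
      proof (cases "\<eta> \<in> U")
        case True
        then obtain m where "m\<in>int_lattice" "\<delta>1 < norm (fourier_meas (Ms n) (\<eta> + m))"
          using a(2) n True by (meson max.boundedE)
        thus ?thesis by (intro bexI[of _ m]) auto
      next
        case False hence "\<eta> \<in> \<Union>T" using e by auto
        then obtain m where "m\<in>int_lattice" "\<delta>2 < norm (fourier_meas (Ms n) (\<eta> + m))"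
          using b(2) n \<open>\<eta> \<in> \<Union>T\<close> by (meson max.boundedE)
        thus ?thesis by (intro bexI[of _ m]) auto
      qed
    qed
  qed
  define C :: "(real^'n) set" where "C = cbox 0 (\<chi> i. 1)"
  have UC: "unit_cube \<subseteq> C" unfolding C_def unit_cube_def by (auto simp: mem_box_cart less_imp_le)
  have cov: "C \<subseteq> \<Union>{U. open U \<and> G U}"
  proof
    fix \<xi> assume "\<xi> \<in> C"
    obtain U where "open U" "\<xi> \<in> U" "G U" using loc[of \<xi>] by (elim exE conjE)
    thus "\<xi> \<in> \<Union>{U. open U \<and> G U}" by (intro UnionI[of U]) auto
  qed
  have cC: "compact C" unfolding C_def by (rule compact_cbox)
  have opn: "\<And>B. B \<in> {U. open U \<and> G U} \<Longrightarrow> open B" by simp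
  obtain T where T: "T \<subseteq> {U. open U \<and> G U}" "finite T" "C \<subseteq> \<Union>T"
    by (rule compactE[OF cC cov opn])
  have "\<forall>U\<in>T. G U" using T(1) by auto
  hence "G (\<Union>T)" using Gun[OF T(2)] by simp
  then obtain \<delta> N where d: "\<delta> > 0" and DN: "\<forall>n\<ge>N. \<forall>\<eta>\<in>\<Union>T. \<exists>m\<in>int_lattice. \<delta> < norm (fourier_meas (Ms n) (\<eta> + m))"
    unfolding G_def by (elim exE conjE) (rule that)
  show ?thesis
  proof (intro exI[of _ "\<lambda>k. k + N"] conjI)
    show "strict_mono (\<lambda>k. k + N)" by (auto simp: strict_mono_def)
    show "\<exists>\<epsilon>0>0. \<forall>x\<in>unit_cube. \<forall>k. \<exists>m\<in>int_lattice. \<epsilon>0 < norm (fourier_meas (Ms (k + N)) (x + m))"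
    proof (intro exI[of _ \<delta>] conjI d ballI allI)
      fix x :: "real^'n" and k :: nat assume "x \<in> unit_cube"
      hence "x \<in> \<Union>T" using UC T(3) by (meson subsetD)
      show "\<exists>m\<in>int_lattice. \<delta> < norm (fourier_meas (Ms (k + N)) (x + m))"
      proof -
        have kN: "N \<le> k + N" by simp
        show ?thesis using bspec[OF spec[OF DN, of "k+N", THEN mp, OF kN] \<open>x \<in> \<Union>T\<close>] .
      qed
    qed
  qed
qed

end
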